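(* Let $\Gamma$ be a finite connected graph, $\Sigma$ a motif in $\Gamma$ with vertices $p_1,\dots,p_m$, and $n_i$ the degree of vertex $i$ in $\Gamma$. Suppose $f$ is a real function on the vertices of $\Sigma$, not identically zero, and $\lambda\in\mathbb{R}$ are such that $$\frac{1}{n_i}\sum_{j\in\Sigma,\ j\sim i} f(j)=(1-\lambda)f(i)\quad\text{for all } i\in\Sigma.$$ Let $\Gamma^\Sigma$ be the graph obtained from $\Gamma$ by adding new vertices $q_1,\dots,q_m$, joining $q_\alpha$ and $q_\beta$ whenever $p_\alpha\sim p_\beta$, and joining each $q_\alpha$ to every vertex $p\notin\Sigma$ that is a neighbor of $p_\alpha$ in $\Gamma$. Then $\lambda$ is an eigenvalue of the normalized Laplacian of $\Gamma^\Sigma$, with an eigenfunction that equals $f(p_\alpha)$ at $p_\alpha$, equals $-f(p_\alpha)$ at $q_\alpha$ for each $\alpha$, and is $0$ at all other vertices.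
   Context: For a finite simple graph without isolated vertices, write $i\sim j$ for adjacency and $n_i$ for the degree of $i$. The normalized Laplacian acts on real functions $v$ on the vertices by $\Delta v(i)=v(i)-\frac{1}{n_i}\sum_{j\sim i}v(j)$; $\lambda$ is an eigenvalue with eigenfunction $u$ if $u\not\equiv 0$ and $\frac{1}{n_i}\sum_{j\sim i}u(j)=(1-\lambda)u(i)$ for all $i$. A motif in $\Gamma$ is a connected subgraph containing all edges of $\Gamma$ between its vertices. *)

theory Defs
  imports Complex_Main
begin

text \<open>A finite simple graph: finite vertex set V, symmetric irreflexive adjacency E
  (only adjacencies between vertices of V are relevant).\<close>
definition simple_graph :: "'a set \<Rightarrow> ('a \<Rightarrow> 'a \<Rightarrow> bool) \<Rightarrow> bool" where
  "simple_graph V E \<longleftrightarrow> finite V \<and> (\<forall>x y. E x y \<longrightarrow> E y x) \<and> (\<forall>x. \<not> E x x)"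

definition neighbors :: "'a set \<Rightarrow> ('a \<Rightarrow> 'a \<Rightarrow> bool) \<Rightarrow> 'a \<Rightarrow> 'a set" where
  "neighbors V E i = {j \<in> V. E i j}"

definition degree :: "'a set \<Rightarrow> ('a \<Rightarrow> 'a \<Rightarrow> bool) \<Rightarrow> 'a \<Rightarrow> nat" where
  "degree V E i = card (neighbors V E i)"

definition no_isolated :: "'a set \<Rightarrow> ('a \<Rightarrow> 'a \<Rightarrow> bool) \<Rightarrow> bool" where
  "no_isolated V E \<longleftrightarrow> (\<forall>i\<in>V. \<exists>j\<in>V. E i j)"

definition connected_graph :: "'a set \<Rightarrow> ('a \<Rightarrow> 'a \<Rightarrow> bool) \<Rightarrow> bool" where
  "connected_graph V E \<longleftrightarrow> V \<noteq> {} \<and>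
     (\<forall>x\<in>V. \<forall>y\<in>V. (\<lambda>a b. a \<in> V \<and> b \<in> V \<and> E a b)\<^sup>*\<^sup>* x y)"

text \<open>A motif: a connected induced subgraph (induced: it contains all edges of the graph
  between its vertices, which is automatic since adjacency is inherited from E).\<close>
definition motif :: "'a set \<Rightarrow> ('a \<Rightarrow> 'a \<Rightarrow> bool) \<Rightarrow> 'a set \<Rightarrow> bool" where
  "motif V E S \<longleftrightarrow> S \<subseteq> V \<and> connected_graph S E"

text \<open>Eigenfunction / eigenvalue of the normalized Laplacian
  \<open>\<Delta> v(i) = v(i) - (1/n_i) \<Sum>_{j\<sim>i} v(j)\<close>.\<close>
definition nl_eigenfunction :: "'a set \<Rightarrow> ('a \<Rightarrow> 'a \<Rightarrow> bool) \<Rightarrow> real \<Rightarrow> ('a \<Rightarrow> real) \<Rightarrow> bool" where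
  "nl_eigenfunction V E lam u \<longleftrightarrow> (\<exists>i\<in>V. u i \<noteq> 0) \<and>
     (\<forall>i\<in>V. (1 / real (degree V E i)) * (\<Sum>j\<in>neighbors V E i. u j) = (1 - lam) * u i)"

definition nl_eigenvalue :: "'a set \<Rightarrow> ('a \<Rightarrow> 'a \<Rightarrow> bool) \<Rightarrow> real \<Rightarrow> bool" where
  "nl_eigenvalue V E lam \<longleftrightarrow> (\<exists>u. nl_eigenfunction V E lam u)"

text \<open>The graph \<open>\<Gamma>^\<Sigma>\<close>: original vertices are \<open>Inl p\<close>, the new copy \<open>q_\<alpha>\<close> of
  \<open>p_\<alpha> \<in> \<Sigma>\<close> is \<open>Inr p_\<alpha>\<close>.\<close>
definition dup_vertices :: "'a set \<Rightarrow> 'a set \<Rightarrow> ('a + 'a) set" where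
  "dup_vertices V S = Inl ` V \<union> Inr ` S"

fun dup_edge :: "'a set \<Rightarrow> ('a \<Rightarrow> 'a \<Rightarrow> bool) \<Rightarrow> 'a set \<Rightarrow> 'a + 'a \<Rightarrow> 'a + 'a \<Rightarrow> bool" where
  "dup_edge V E S (Inl a) (Inl b) = E a b"
| "dup_edge V E S (Inr a) (Inr b) = (a \<in> S \<and> b \<in> S \<and> E a b)"
| "dup_edge V E S (Inr a) (Inl p) = (a \<in> S \<and> p \<in> V \<and> p \<notin> S \<and> E a p)"
| "dup_edge V E S (Inl p) (Inr a) = (a \<in> S \<and> p \<in> V \<and> p \<notin> S \<and> E a p)"

end

theory Submission
  imports Defs
begin

lemma nbrL:
  assumes "p \<in> V"
  shows "neighbors (dup_vertices V S) (dup_edge V E S) (Inl p) =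
    Inl ` {b\<in>V. E p b} \<union> Inr ` {a\<in>S. p \<notin> S \<and> E a p}"
  using assms unfolding neighbors_def dup_vertices_def
  by (auto elim: dup_edge.elims)

lemma nbrR:
  assumes "p \<in> S"
  shows "neighbors (dup_vertices V S) (dup_edge V E S) (Inr p) =
    Inr ` {b\<in>S. E p b} \<union> Inl ` {q\<in>V. q \<notin> S \<and> E p q}"
  using assms unfolding neighbors_def dup_vertices_def
  by (auto elim: dup_edge.elims)

theorem theorem3:
  fixes V S :: "'a set" and E :: "'a \<Rightarrow> 'a \<Rightarrow> bool" and f :: "'a \<Rightarrow> real" and lam :: real
  assumes "simple_graph V E" and "no_isolated V E" and "connected_graph V E"
    and "motif V E S"
    and "\<exists>i\<in>S. f i \<noteq> 0"
    and "\<forall>i\<in>S. (1 / real (degree V E i)) * (\<Sum>j\<in>{j \<in> S. E i j}. f j) = (1 - lam) * f i"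
  shows "nl_eigenvalue (dup_vertices V S) (dup_edge V E S) lam \<and>
    nl_eigenfunction (dup_vertices V S) (dup_edge V E S) lam
      (\<lambda>x. case x of Inl p \<Rightarrow> (if p \<in> S then f p else 0) | Inr p \<Rightarrow> - f p)"
proof -
  define u where "u = (\<lambda>x. case x of Inl p \<Rightarrow> (if p \<in> S then f p else 0) | Inr p \<Rightarrow> - f p)"
  have fin: "finite V" and sym: "\<And>x y. E x y \<Longrightarrow> E y x" using assms(1) by (auto simp: simple_graph_def)
  have SV: "S \<subseteq> V" using assms(4) by (simp add: motif_def)
  have finS: "finite S" using fin SV finite_subset by blast
  have eig: "nl_eigenfunction (dup_vertices V S) (dup_edge V E S) lam u"
    unfolding nl_eigenfunction_def
  proof (intro conjI ballI)
    obtain i where "i \<in> S" "f i \<noteq> 0" using assms(5) by blast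
    then show "\<exists>i\<in>dup_vertices V S. u i \<noteq> 0"
      using SV by (intro bexI[of _ "Inl i"]) (auto simp: u_def dup_vertices_def)
  next
    fix x assume x: "x \<in> dup_vertices V S"
    show "1 / real (degree (dup_vertices V S) (dup_edge V E S) x) *
        (\<Sum>j\<in>neighbors (dup_vertices V S) (dup_edge V E S) x. u j) = (1 - lam) * u x"
    proof (cases x)
      case (Inl p)
      with x have pV: "p \<in> V" by (auto simp: dup_vertices_def)
      have A: "finite {b\<in>V. E p b}" "finite {a\<in>S. p \<notin> S \<and> E a p}" using fin finS by auto
      have s: "(\<Sum>j\<in>neighbors (dup_vertices V S) (dup_edge V E S) x. u j)
          = (\<Sum>b\<in>{b\<in>V. E p b}. u (Inl b)) + (\<Sum>a\<in>{a\<in>S. p \<notin> S \<and> E a p}. u (Inr a))"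
        unfolding Inl nbrL[OF pV]
        by (subst sum.union_disjoint) (use A in \<open>auto simp: sum.reindex\<close>)
      have s1: "(\<Sum>b\<in>{b\<in>V. E p b}. u (Inl b)) = (\<Sum>b\<in>{b\<in>S. E p b}. f b)"
      proof -
        have "(\<Sum>b\<in>{b\<in>V. E p b}. u (Inl b)) = (\<Sum>b\<in>{b\<in>V. E p b}. if b \<in> S then f b else 0)"
          by (simp add: u_def)
        also have "\<dots> = (\<Sum>b\<in>{b\<in>V. E p b} \<inter> {b. b \<in> S}. f b)"
          using A(1) by (simp add: sum.inter_restrict)
        also have "{b\<in>V. E p b} \<inter> {b. b \<in> S} = {b\<in>S. E p b}" using SV by auto
        finally show ?thesis .
      qed
      show ?thesis
      proof (cases "p \<in> S")
        case True
        have "neighbors (dup_vertices V S) (dup_edge V E S) x = Inl ` {b\<in>V. E p b}"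
          unfolding Inl nbrL[OF pV] using True by auto
        then have d: "degree (dup_vertices V S) (dup_edge V E S) x = degree V E p"
          by (simp add: degree_def neighbors_def card_image)
        have "(\<Sum>a\<in>{a\<in>S. p \<notin> S \<and> E a p}. u (Inr a)) = 0" using True by simp
        then show ?thesis using s s1 d assms(6) True by (simp add: Inl u_def)
      next
        case False
        have "(\<Sum>a\<in>{a\<in>S. p \<notin> S \<and> E a p}. u (Inr a)) = - (\<Sum>b\<in>{b\<in>S. E p b}. f b)"
          using False sym by (simp add: u_def sum_negf) (metis)
        then show ?thesis using s s1 False by (simp add: Inl u_def)
      qed
    next
      case (Inr p)
      with x have pS: "p \<in> S" by (auto simp: dup_vertices_def)
      have A: "finite {b\<in>S. E p b}" "finite {q\<in>V. q \<notin> S \<and> E p q}" using fin finS by auto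
      have N: "neighbors (dup_vertices V S) (dup_edge V E S) x =
          Inr ` {b\<in>S. E p b} \<union> Inl ` {q\<in>V. q \<notin> S \<and> E p q}" unfolding Inr nbrR[OF pS] ..
      have s: "(\<Sum>j\<in>neighbors (dup_vertices V S) (dup_edge V E S) x. u j)
          = (\<Sum>b\<in>{b\<in>S. E p b}. u (Inr b)) + (\<Sum>a\<in>{q\<in>V. q \<notin> S \<and> E p q}. u (Inl a))"
        unfolding N
        by (subst sum.union_disjoint) (use A in \<open>auto simp: sum.reindex\<close>)
      have z: "(\<Sum>a\<in>{q\<in>V. q \<notin> S \<and> E p q}. u (Inl a)) = 0" by (simp add: u_def)
      have "card (neighbors (dup_vertices V S) (dup_edge V E S) x)
          = card {b\<in>S. E p b} + card {q\<in>V. q \<notin> S \<and> E p q}"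
        unfolding N by (subst card_Un_disjoint) (use A in \<open>auto simp: card_image\<close>)
      also have "\<dots> = card ({b\<in>S. E p b} \<union> {q\<in>V. q \<notin> S \<and> E p q})"
        by (subst card_Un_disjoint) (use A in auto)
      also have "{b\<in>S. E p b} \<union> {q\<in>V. q \<notin> S \<and> E p q} = neighbors V E p"
        using SV by (auto simp: neighbors_def)
      finally have d: "degree (dup_vertices V S) (dup_edge V E S) x = degree V E p"
        by (simp add: degree_def)
      have e: "(1 / real (degree V E p)) * (\<Sum>j\<in>{j \<in> S. E p j}. f j) = (1 - lam) * f p"
        using assms(6) pS by blast
      have "(\<Sum>b\<in>{b\<in>S. E p b}. u (Inr b)) = - (\<Sum>b\<in>{b\<in>S. E p b}. f b)"
        by (simp add: u_def sum_negf)
      then show ?thesis using s z d e by (simp add: Inr u_def)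
    qed
  qed
  then show ?thesis unfolding nl_eigenvalue_def u_def by blast
qed

end
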